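(* In the setting described in the context, let $g\in\mathcal{G}$ and let $\mathcal{Y}$ and $\widetilde{\mathcal{Y}}$ be two representative sets, with functions $A,\widetilde{A}$ and projectors $P,\widetilde{P}$ respectively, such that $\int A\circ g\,d\mu<\infty$ and $\int \widetilde{A}\circ g\,d\mu<\infty$. Define $\nu=P_\sharp\mu_A$, $g_\star\nu=P_\sharp\big((g_\sharp\mu)_A\big)$, $\widetilde{\nu}=\widetilde{P}_\sharp\mu_{\widetilde{A}}$ and $g_\star\widetilde{\nu}=\widetilde{P}_\sharp\big((g_\sharp\mu)_{\widetilde{A}}\big)$. If $g_\star\nu=\nu$, then $g_\star\widetilde{\nu}=\widetilde{\nu}$.
   Context: Let $(\mathcal{X},\Sigma)$ be a measurable space. A flow on $\mathcal{X}$ is a family $(\Phi^t)_{t\in\mathbb{R}}$ of bijective measurable maps with $\Phi^{t_1}\circ\Phi^{t_2}=\Phi^{t_1+t_2}$, $(x,t)\mapsto\Phi^t(x)$ measurable. $f_\sharp\rho=\rho\circ f^{-1}$ is push-forward; $\rho$ is invariant if $\Phi^t_\sharp\rho=\rho$ for all $t$. Fix a flow $\Phi^t$ and an invariant probability measure $\mu$ on $\mathcal{X}$. Let $h^a$, $a>0$, be bijective measurable maps of $\mathcal{X}$ and $\mathcal{G}$ a group (under composition) of bijective measurable maps of $\mathcal{X}$ such that for all $a,a_1,a_2>0$, $t$, $g\in\mathcal{G}$: $h^{a_1}\circ h^{a_2}=h^{a_1a_2}$, $\Phi^t\circ g=g\circ\Phi^t$, $g\circ h^a=h^a\circ g$,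 $\Phi^t\circ h^a=h^a\circ\Phi^{t/a}$. A set $\mathcal{Y}\subset\mathcal{X}$ is a representative set if for every $x$ there is a unique $a=A(x)>0$ with $h^a(x)\in\mathcal{Y}$, with $A:\mathcal{X}\to(0,\infty)$ measurable and $\int A\,d\mu<\infty$; its projector is $P(x)=h^{A(x)}(x)$. For a measure $\rho$ and positive measurable $B$ with $0<\int B\,d\rho<\infty$, $\rho_B$ is the probability measure with $d\rho_B/d\rho=B/\int B\,d\rho$. The measure $\nu$ is the invariant measure of the normalized flow $P\circ\Phi^\tau_A$ on $\mathcal{Y}$, and $g_\star\nu$ is the analogous normalized measure obtained from the invariant measure $g_\sharp\mu$. *)

theory Defs
  imports "HOL-Probability.Probability"
begin

definition is_flow :: "'a measure \<Rightarrow> (real \<Rightarrow> 'a \<Rightarrow> 'a) \<Rightarrow> bool" where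
  "is_flow M \<Phi> \<longleftrightarrow>
     (\<forall>t. bij_betw (\<Phi> t) (space M) (space M) \<and> \<Phi> t \<in> M \<rightarrow>\<^sub>M M) \<and>
     (\<forall>t1 t2. \<forall>x\<in>space M. \<Phi> t1 (\<Phi> t2 x) = \<Phi> (t1 + t2) x) \<and>
     (\<lambda>(x, t). \<Phi> t x) \<in> M \<Otimes>\<^sub>M borel \<rightarrow>\<^sub>M M"

definition flow_invariant :: "'a measure \<Rightarrow> (real \<Rightarrow> 'a \<Rightarrow> 'a) \<Rightarrow> bool" where
  "flow_invariant \<rho> \<Phi> \<longleftrightarrow> (\<forall>t. distr \<rho> \<rho> (\<Phi> t) = \<rho>)"

definition scaling_structure ::
  "'a measure \<Rightarrow> (real \<Rightarrow> 'a \<Rightarrow> 'a) \<Rightarrow> (real \<Rightarrow> 'a \<Rightarrow> 'a) \<Rightarrow> ('a \<Rightarrow> 'a) set \<Rightarrow> bool" where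
  "scaling_structure M \<Phi> h G \<longleftrightarrow>
     (\<forall>a>0. bij_betw (h a) (space M) (space M) \<and> h a \<in> M \<rightarrow>\<^sub>M M) \<and>
     (\<forall>g\<in>G. bij_betw g (space M) (space M) \<and> g \<in> M \<rightarrow>\<^sub>M M) \<and>
     id \<in> G \<and>
     (\<forall>g1\<in>G. \<forall>g2\<in>G. g1 \<circ> g2 \<in> G) \<and>
     (\<forall>g\<in>G. \<exists>g'\<in>G. \<forall>x\<in>space M. g' (g x) = x \<and> g (g' x) = x) \<and>
     (\<forall>a1>0. \<forall>a2>0. \<forall>x\<in>space M. h a1 (h a2 x) = h (a1 * a2) x) \<and>
     (\<forall>t. \<forall>g\<in>G. \<forall>x\<in>space M. \<Phi> t (g x) = g (\<Phi> t x)) \<and>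
     (\<forall>a>0. \<forall>g\<in>G. \<forall>x\<in>space M. g (h a x) = h a (g x)) \<and>
     (\<forall>a>0. \<forall>t. \<forall>x\<in>space M. \<Phi> t (h a x) = h a (\<Phi> (t / a) x))"

definition representative_set ::
  "'a measure \<Rightarrow> (real \<Rightarrow> 'a \<Rightarrow> 'a) \<Rightarrow> 'a set \<Rightarrow> ('a \<Rightarrow> real) \<Rightarrow> bool" where
  "representative_set M h Y A \<longleftrightarrow>
     Y \<subseteq> space M \<and>
     (\<forall>x\<in>space M. A x > 0 \<and> h (A x) x \<in> Y \<and> (\<forall>a>0. h a x \<in> Y \<longrightarrow> a = A x)) \<and>
     A \<in> borel_measurable M \<and>
     (\<integral>\<^sup>+ x. ennreal (A x) \<partial>M) < \<infinity>"

definition projector :: "(real \<Rightarrow> 'a \<Rightarrow> 'a) \<Rightarrow> ('a \<Rightarrow> real) \<Rightarrow> 'a \<Rightarrow> 'a" where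
  "projector h A x = h (A x) x"

definition normalized_measure :: "'a measure \<Rightarrow> ('a \<Rightarrow> real) \<Rightarrow> 'a measure" where
  "normalized_measure \<rho> B =
     density \<rho> (\<lambda>x. ennreal (B x) / (\<integral>\<^sup>+ y. ennreal (B y) \<partial>\<rho>))"

end

theory Submission
  imports Defs
begin

lemma pos_fin_int:
  assumes "prob_space \<rho>" "A \<in> borel_measurable \<rho>" "\<forall>x\<in>space \<rho>. A x > 0"
    "(\<integral>\<^sup>+ x. ennreal (A x) \<partial>\<rho>) < \<infinity>"
  obtains r where "r > 0" "(\<integral>\<^sup>+ x. ennreal (A x) \<partial>\<rho>) = ennreal r"
proof -
  have "(\<integral>\<^sup>+ x. ennreal (A x) \<partial>\<rho>) \<noteq> 0"
  proof
    assume "(\<integral>\<^sup>+ x. ennreal (A x) \<partial>\<rho>) = 0"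
    then have "AE x in \<rho>. ennreal (A x) = 0"
      using nn_integral_0_iff_AE[of "\<lambda>x. ennreal (A x)" \<rho>] assms(2) by simp
    then have "AE x in \<rho>. False"
      using AE_space[of \<rho>] by eventually_elim (use assms(3) in \<open>auto\<close>)
    moreover have "\<not> (AE x in \<rho>. False)"
      using prob_space.AE_False[OF assms(1)] by simp
    ultimately show False by simp
  qed
  then show ?thesis using assms(4) that
    by (cases "(\<integral>\<^sup>+ x. ennreal (A x) \<partial>\<rho>)") (auto simp: ennreal_less_zero_iff)
qed

lemma em_dd:
  assumes [measurable]: "f \<in> borel_measurable N" "T \<in> N \<rightarrow>\<^sub>M M" "S \<in> sets M"
  shows "emeasure (distr (density N f) M T) S = (\<integral>\<^sup>+ y. f y * indicator S (T y) \<partial>N)"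
  by (subst emeasure_distr) (auto simp: emeasure_density intro!: nn_integral_cong split: split_indicator)

lemma key:
  fixes \<rho> M :: "'a measure" and A A' :: "'a \<Rightarrow> real" and P P' :: "'a \<Rightarrow> 'a"
  assumes ps: "prob_space \<rho>" and sets: "sets \<rho> = sets M"
    and Am[measurable]: "A \<in> borel_measurable M" and A'm[measurable]: "A' \<in> borel_measurable M"
    and Pm[measurable]: "P \<in> M \<rightarrow>\<^sub>M M" and P'm[measurable]: "P' \<in> M \<rightarrow>\<^sub>M M"
    and Apos: "\<forall>x\<in>space M. A x > 0" and A'pos: "\<forall>x\<in>space M. A' x > 0"
    and fin: "(\<integral>\<^sup>+ x. ennreal (A x) \<partial>\<rho>) < \<infinity>"
    and fin': "(\<integral>\<^sup>+ x. ennreal (A' x) \<partial>\<rho>) < \<infinity>"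
    and rel: "\<forall>x\<in>space M. A x * A' (P x) = A' x"
    and relP: "\<forall>x\<in>space M. P' (P x) = P' x"
  shows "distr (normalized_measure \<rho> A') M P'
     = distr (normalized_measure (distr (normalized_measure \<rho> A) M P) A') M P'"
proof -
  have sp: "space \<rho> = space M" using sets by (rule sets_eq_imp_space_eq)
  have mr[measurable]: "A \<in> borel_measurable \<rho>" "A' \<in> borel_measurable \<rho>" "P \<in> \<rho> \<rightarrow>\<^sub>M M"
      "P' \<in> \<rho> \<rightarrow>\<^sub>M M"
    using Am A'm Pm P'm by (simp_all add: measurable_cong_sets[OF sets refl])
  obtain r where r: "r > 0" "(\<integral>\<^sup>+ x. ennreal (A x) \<partial>\<rho>) = ennreal r"
    using pos_fin_int[OF ps mr(1) _ fin] Apos sp by auto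
  obtain r' where r': "r' > 0" "(\<integral>\<^sup>+ x. ennreal (A' x) \<partial>\<rho>) = ennreal r'"
    using pos_fin_int[OF ps mr(2) _ fin'] A'pos sp by auto
  define \<nu> where "\<nu> = distr (normalized_measure \<rho> A) M P"
  have N: "normalized_measure \<rho> A = density \<rho> (\<lambda>x. ennreal (A x / r))"
    unfolding normalized_measure_def r(2)
    by (intro density_cong) (use r Apos sp in \<open>auto simp: divide_ennreal less_imp_le\<close>)
  have intnu: "(\<integral>\<^sup>+ y. F y \<partial>\<nu>) = (\<integral>\<^sup>+ x. ennreal (A x / r) * F (P x) \<partial>\<rho>)"
    if [measurable]: "F \<in> borel_measurable M" for F
    unfolding \<nu>_def N
    by (subst nn_integral_distr) (auto simp: nn_integral_density)
  have "(\<integral>\<^sup>+ y. ennreal (A' y) \<partial>\<nu>) = (\<integral>\<^sup>+ x. ennreal (A' x / r) \<partial>\<rho>)"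
    unfolding intnu[OF measurable_compose[OF A'm measurable_ennreal]]
  proof (intro nn_integral_cong)
    fix x assume x: "x \<in> space \<rho>"
    have Px: "P x \<in> space M" using measurable_space[OF Pm] x sp by auto
    have "A x / r * A' (P x) = A' x / r" using rel x sp by auto
    then show "ennreal (A x / r) * ennreal (A' (P x)) = ennreal (A' x / r)"
      using Px A'pos Apos x sp r by (auto simp: ennreal_mult''[symmetric] less_imp_le)
  qed
  also have "\<dots> = ennreal (r' / r)"
  proof -
    have "(\<integral>\<^sup>+ x. ennreal (A' x / r) \<partial>\<rho>) = (\<integral>\<^sup>+ x. ennreal (A' x) / ennreal r \<partial>\<rho>)"
      by (intro nn_integral_cong) (use r A'pos sp in \<open>auto simp: divide_ennreal less_imp_le\<close>)
    also have "\<dots> = ennreal r' / ennreal r"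
      by (subst nn_integral_divide) (auto simp: r'(2))
    also have "\<dots> = ennreal (r' / r)" using r r' by (simp add: divide_ennreal)
    finally show ?thesis .
  qed
  finally have K: "(\<integral>\<^sup>+ y. ennreal (A' y) \<partial>\<nu>) = ennreal (r' / r)" .
  have spn: "space \<nu> = space M" "sets \<nu> = sets M" unfolding \<nu>_def by auto
  have N': "normalized_measure \<nu> A' = density \<nu> (\<lambda>x. ennreal (A' x / (r' / r)))"
    unfolding normalized_measure_def K
    by (intro density_cong) (use r r' A'pos spn in \<open>auto simp: divide_ennreal less_imp_le\<close>)
  have N'': "normalized_measure \<rho> A' = density \<rho> (\<lambda>x. ennreal (A' x / r'))"
    unfolding normalized_measure_def r'(2)
    by (intro density_cong) (use r' A'pos sp in \<open>auto simp: divide_ennreal less_imp_le\<close>)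
  show ?thesis
    unfolding \<nu>_def[symmetric]
  proof (rule measure_eqI)
    show "sets (distr (normalized_measure \<rho> A') M P') = sets (distr (normalized_measure \<nu> A') M P')"
      by simp
    fix S assume "S \<in> sets (distr (normalized_measure \<rho> A') M P')"
    then have S[measurable]: "S \<in> sets M" by simp
    have "emeasure (distr (normalized_measure \<nu> A') M P') S
        = (\<integral>\<^sup>+ y. ennreal (A' y / (r' / r)) * indicator S (P' y) \<partial>\<nu>)"
      unfolding N' by (rule em_dd) (auto simp: measurable_cong_sets[OF spn(2) refl])
    also have "\<dots> = (\<integral>\<^sup>+ x. ennreal (A x / r) * (ennreal (A' (P x) / (r' / r)) * indicator S (P' (P x))) \<partial>\<rho>)"
      by (rule intnu) measurable
    also have "\<dots> = (\<integral>\<^sup>+ x. ennreal (A' x / r') * indicator S (P' x) \<partial>\<rho>)"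
    proof (intro nn_integral_cong)
      fix x assume x: "x \<in> space \<rho>"
      have Px: "P x \<in> space M" using measurable_space[OF Pm] x sp by auto
      have "A x / r * (A' (P x) / (r' / r)) = A' x / r'"
        using rel x sp r(1) r'(1) by (auto simp: field_simps)
      then have e: "ennreal (A x / r) * ennreal (A' (P x) / (r' / r)) = ennreal (A' x / r')"
        using Px A'pos r(1) r'(1) by (simp add: ennreal_mult''[symmetric] less_imp_le)
      show "ennreal (A x / r) * (ennreal (A' (P x) / (r' / r)) * indicator S (P' (P x))) =
         ennreal (A' x / r') * indicator S (P' x)"
        using relP x sp e by (simp add: mult.assoc[symmetric])
    qed
    also have "\<dots> = emeasure (distr (normalized_measure \<rho> A') M P') S"
      unfolding N'' by (rule em_dd[symmetric]) auto
    finally show "emeasure (distr (normalized_measure \<rho> A') M P') S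
      = emeasure (distr (normalized_measure \<nu> A') M P') S" by simp
  qed
qed


lemma rels:
  assumes ss: "scaling_structure M \<Phi> h G"
    and rA: "representative_set M h Y A" and rA': "representative_set M h Y' A'"
    and x: "x \<in> space M"
  shows "A x * A' (projector h A x) = A' x" "projector h A' (projector h A x) = projector h A' x"
proof -
  have hb: "\<And>a. a > 0 \<Longrightarrow> bij_betw (h a) (space M) (space M)"
    and hc: "\<forall>a1>0. \<forall>a2>0. \<forall>x\<in>space M. h a1 (h a2 x) = h (a1 * a2) x"
    using ss unfolding scaling_structure_def by auto
  have A1: "\<forall>x\<in>space M. A x > 0 \<and> h (A x) x \<in> Y \<and> (\<forall>a>0. h a x \<in> Y \<longrightarrow> a = A x)"
    using rA unfolding representative_set_def by auto
  have A2: "\<forall>x\<in>space M. A' x > 0 \<and> h (A' x) x \<in> Y' \<and> (\<forall>a>0. h a x \<in> Y' \<longrightarrow> a = A' x)"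
    using rA' unfolding representative_set_def by auto
  define a where "a = A x"
  have a: "a > 0" using A1 x a_def by auto
  define z where "z = h a x"
  have z: "z \<in> space M" using hb[OF a] x unfolding z_def bij_betw_def by auto
  have z1: "A' z > 0" "h (A' z) z \<in> Y'" using A2 z by auto
  have e: "h (A' z) z = h (A' z * a) x" using hc[rule_format, OF z1(1) a x] unfolding z_def .
  have "A' z * a = A' x" using A2 x e z1 a by auto
  then show "A x * A' (projector h A x) = A' x"
    unfolding projector_def a_def[symmetric] z_def[symmetric] by (simp add: mult.commute)
  show "projector h A' (projector h A x) = projector h A' x"
    unfolding projector_def a_def[symmetric] z_def[symmetric]
    using e \<open>A' z * a = A' x\<close> by simp
qed

theorem theorem3:
  fixes M :: "'a measure" and \<Phi> h :: "real \<Rightarrow> 'a \<Rightarrow> 'a" and G :: "('a \<Rightarrow> 'a) set"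
    and g :: "'a \<Rightarrow> 'a" and Y Y' :: "'a set" and A A' :: "'a \<Rightarrow> real"
  assumes "prob_space M"
    and "is_flow M \<Phi>"
    and "flow_invariant M \<Phi>"
    and "scaling_structure M \<Phi> h G"
    and "g \<in> G"
    and "representative_set M h Y A"
    and "representative_set M h Y' A'"
    and "projector h A \<in> M \<rightarrow>\<^sub>M M"
    and "projector h A' \<in> M \<rightarrow>\<^sub>M M"
    and "(\<integral>\<^sup>+ x. ennreal (A (g x)) \<partial>M) < \<infinity>"
    and "(\<integral>\<^sup>+ x. ennreal (A' (g x)) \<partial>M) < \<infinity>"
    and "distr (normalized_measure (distr M M g) A) M (projector h A)
           = distr (normalized_measure M A) M (projector h A)"
  shows "distr (normalized_measure (distr M M g) A') M (projector h A')
           = distr (normalized_measure M A') M (projector h A')"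
proof -
  note ss = assms(4)
  have gm: "g \<in> M \<rightarrow>\<^sub>M M" using ss assms(5) unfolding scaling_structure_def by auto
  have rA: "A \<in> borel_measurable M" "\<forall>x\<in>space M. A x > 0" "(\<integral>\<^sup>+ x. ennreal (A x) \<partial>M) < \<infinity>"
    using assms(6) unfolding representative_set_def by auto
  have rA': "A' \<in> borel_measurable M" "\<forall>x\<in>space M. A' x > 0" "(\<integral>\<^sup>+ x. ennreal (A' x) \<partial>M) < \<infinity>"
    using assms(7) unfolding representative_set_def by auto
  have r1: "\<forall>x\<in>space M. A x * A' (projector h A x) = A' x"
    and r2: "\<forall>x\<in>space M. projector h A' (projector h A x) = projector h A' x"
    using rels[OF ss assms(6) assms(7)] by auto
  have psg: "prob_space (distr M M g)"
    by (rule prob_space.prob_space_distr[OF assms(1) gm])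
  have fA: "(\<integral>\<^sup>+ x. ennreal (A x) \<partial>distr M M g) < \<infinity>"
    using assms(10) by (subst nn_integral_distr[OF gm]) (auto intro: measurable_compose[OF rA(1)])
  have fA': "(\<integral>\<^sup>+ x. ennreal (A' x) \<partial>distr M M g) < \<infinity>"
    using assms(11) by (subst nn_integral_distr[OF gm]) (auto intro: measurable_compose[OF rA'(1)])
  have k1: "distr (normalized_measure (distr M M g) A') M (projector h A')
     = distr (normalized_measure (distr (normalized_measure (distr M M g) A) M (projector h A)) A') M (projector h A')"
    by (rule key[OF psg _ rA(1) rA'(1) assms(8) assms(9) rA(2) rA'(2) fA fA' r1 r2]) simp
  have k2: "distr (normalized_measure M A') M (projector h A')
     = distr (normalized_measure (distr (normalized_measure M A) M (projector h A)) A') M (projector h A')"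
    by (rule key[OF assms(1) _ rA(1) rA'(1) assms(8) assms(9) rA(2) rA'(2) rA(3) rA'(3) r1 r2]) simp
  show ?thesis unfolding k1 k2 assms(12) ..
qed

end
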